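(* Let $A_1,\dots,A_m\in\mathbb{C}^{n\times n}$ be Hermitian matrices. There do not exist $P\in\mathrm{GL}_n(\mathbb{C})$, $t\ge 2$ and positive integers $n_1,\dots,n_t$ with $\sum_jn_j=n$ such that every $P^*A_iP$ is block diagonal with diagonal blocks of sizes $n_1,\dots,n_t$ if and only if the only matrices $X\in Z(A_1,\dots,A_m)$ with $X^2=X$ are $0$ and $I_n$.
   Context: For Hermitian $A_1,\dots,A_m\in\mathbb{C}^{n\times n}$, the center is $Z(A_1,\dots,A_m)=\{X\in\mathbb{C}^{n\times n} : (A_iX)^*=A_iX \text{ for all } i\}$, where $^*$ denotes conjugate transpose. *)

theory Defs
  imports "Jordan_Normal_Form.Schur_Decomposition"
begin

text \<open>Conjugate transpose of a complex matrix is the library's mat_adjoint.\<close>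

definition hermitian_mat :: "complex mat \<Rightarrow> bool" where
  "hermitian_mat A \<longleftrightarrow> square_mat A \<and> mat_adjoint A = A"

definition center :: "nat \<Rightarrow> complex mat list \<Rightarrow> complex mat set" where
  "center n As = {X \<in> carrier_mat n n. \<forall>A \<in> set As. mat_adjoint (A * X) = A * X}"

text \<open>Indices i and j (0-based) lie in the same diagonal block, for consecutive
  blocks of sizes ns ! 0, ns ! 1, ... : no block boundary (partial sum) separates them.\<close>
definition same_block :: "nat list \<Rightarrow> nat \<Rightarrow> nat \<Rightarrow> bool" where
  "same_block ns i j \<longleftrightarrow>
     (\<forall>k \<le> length ns. (i < sum_list (take k ns)) = (j < sum_list (take k ns)))"

definition block_diag_with :: "nat list \<Rightarrow> complex mat \<Rightarrow> bool" where
  "block_diag_with ns M \<longleftrightarrow>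
     (\<forall>i < dim_row M. \<forall>j < dim_col M. \<not> same_block ns i j \<longrightarrow> M $$ (i, j) = 0)"

end

theory Submission
  imports Defs
begin


lemma adj_carrier[simp]: "A \<in> carrier_mat a b \<Longrightarrow> mat_adjoint A \<in> carrier_mat b a"
  unfolding mat_adjoint_def by auto

lemma adj_dims[simp]: "dim_row (mat_adjoint A) = dim_col A" "dim_col (mat_adjoint A) = dim_row A"
  unfolding mat_adjoint_def by auto

lemma adj_index[simp]: "i < dim_col A \<Longrightarrow> j < dim_row A \<Longrightarrow> mat_adjoint A $$ (i,j) = conjugate (A $$ (j,i))"
  unfolding mat_adjoint_def by (simp add: mat_of_rows_index)

lemma adj_adj[simp]: "mat_adjoint (mat_adjoint (A::complex mat)) = A"
  by (rule eq_matI, auto)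

lemma adj_mult: fixes A B :: "complex mat"
  assumes "A \<in> carrier_mat a b" "B \<in> carrier_mat b c"
  shows "mat_adjoint (A * B) = mat_adjoint B * mat_adjoint A"
proof (rule eq_matI)
  fix i j assume ij: "i < dim_row (mat_adjoint B * mat_adjoint A)" "j < dim_col (mat_adjoint B * mat_adjoint A)"
  hence i: "i < c" and j: "j < a" using assms by auto
  have "mat_adjoint (A * B) $$ (i,j) = conjugate (\<Sum>k\<in>{0..<b}. A $$ (j,k) * B $$ (k,i))"
    using assms i j by (simp add: scalar_prod_def)
  also have "\<dots> = (\<Sum>k\<in>{0..<b}. conjugate (B $$ (k,i)) * conjugate (A $$ (j,k)))"
    by (simp add: sum_conjugate conjugate_dist_mul mult.commute)
  also have "\<dots> = (mat_adjoint B * mat_adjoint A) $$ (i,j)"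
    using assms i j by (simp add: scalar_prod_def)
  finally show "mat_adjoint (A * B) $$ (i, j) = (mat_adjoint B * mat_adjoint A) $$ (i, j)" .
qed (insert assms, auto)

lemma adj_one[simp]: "mat_adjoint (1\<^sub>m n :: complex mat) = 1\<^sub>m n"
  by (rule eq_matI, auto)

definition dg :: "nat \<Rightarrow> nat \<Rightarrow> complex mat" where
  "dg n r = mat n n (\<lambda>(i,j). if i = j \<and> i < r then 1 else 0)"

lemma dg_carrier[simp]: "dg n r \<in> carrier_mat n n" "dim_row (dg n r) = n" "dim_col (dg n r) = n"
  unfolding dg_def by auto

lemma dg_index[simp]: "i < n \<Longrightarrow> j < n \<Longrightarrow> dg n r $$ (i,j) = (if i = j \<and> i < r then 1 else 0)"
  unfolding dg_def by auto

lemma adj_dg[simp]: "mat_adjoint (dg n r) = dg n r"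
  by (rule eq_matI, auto)

lemma mult_dg: assumes "M \<in> carrier_mat m n" "i < m" "j < n"
  shows "(M * dg n r) $$ (i,j) = (if j < r then M $$ (i,j) else 0)"
proof -
  have "(M * dg n r) $$ (i,j) = (\<Sum>k\<in>{0..<n}. M $$ (i,k) * (if k = j \<and> k < r then 1 else 0))"
    using assms by (simp add: scalar_prod_def)
  also have "\<dots> = (\<Sum>k\<in>{0..<n}. if k = j then (if j < r then M $$ (i,j) else 0) else 0)"
    by (rule sum.cong, auto)
  also have "\<dots> = (if j < r then M $$ (i,j) else 0)" using assms by simp
  finally show ?thesis .
qed

lemma dg_mult: assumes "M \<in> carrier_mat n m" "i < n" "j < m"
  shows "(dg n r * M) $$ (i,j) = (if i < r then M $$ (i,j) else 0)"
proof -
  have "(dg n r * M) $$ (i,j) = (\<Sum>k\<in>{0..<n}. (if i = k \<and> i < r then 1 else 0) * M $$ (k,j))"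
    using assms by (simp add: scalar_prod_def)
  also have "\<dots> = (\<Sum>k\<in>{0..<n}. if k = i then (if i < r then M $$ (i,j) else 0) else 0)"
    by (rule sum.cong, auto)
  also have "\<dots> = (if i < r then M $$ (i,j) else 0)" using assms by simp
  finally show ?thesis .
qed

lemma idem_diag: fixes B :: "complex mat"
  assumes B: "B \<in> carrier_mat n n" "upper_triangular B" "B * B = B" and i: "i < n"
  shows "B $$ (i,i) = 0 \<or> B $$ (i,i) = 1"
proof -
  have "B $$ (i,i) = (B*B) $$ (i,i)" using B by simp
  also have "\<dots> = (\<Sum>k\<in>{0..<n}. B $$ (i,k) * B $$ (k,i))"
    using B(1) i by (simp add: scalar_prod_def)
  also have "\<dots> = (\<Sum>k\<in>{0..<n}. if k = i then B $$ (i,i) * B $$ (i,i) else 0)"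
    apply (rule sum.cong, simp)
    using B i by (auto simp: upper_triangular_def) (metis linorder_neqE_nat)
  also have "\<dots> = B $$ (i,i) * B $$ (i,i)" using i by simp
  finally show ?thesis
    by (metis mult_cancel_left1 mult_zero_left)
qed

lemma prod_filter_split:
  "prod_list (map f (filter P xs)) * prod_list (map f (filter (\<lambda>x. \<not> P x) xs)) = (prod_list (map f xs) :: 'a :: comm_monoid_mult)"
  by (induct xs) (auto simp: mult_ac)

lemma diagonalize_idem: fixes X :: "complex mat"
  assumes X: "X \<in> carrier_mat n n" and idem: "X * X = X"
  shows "\<exists>P Pi r. P \<in> carrier_mat n n \<and> Pi \<in> carrier_mat n n \<and> P * Pi = 1\<^sub>m n \<and> Pi * P = 1\<^sub>m n
     \<and> r \<le> n \<and> X * P = P * dg n r"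
proof -
  obtain es where cp0: "char_poly X = (\<Prod>a\<leftarrow>es. [:- a, 1:])" using char_poly_factorized[OF X] by auto
  define es' where "es' = filter (\<lambda>e. e = 1) es @ filter (\<lambda>e. \<not> e = 1) es"
  define r where "r = length (filter (\<lambda>e. e = 1) es)"
  have cp: "char_poly X = (\<Prod>a\<leftarrow>es'. [:- a, 1:])"
    unfolding cp0 es'_def using prod_filter_split[of "\<lambda>a. [:- a, 1:]" "\<lambda>e. e = 1" es] by simp
  obtain B P Q where sd: "schur_decomposition X es' = (B,P,Q)" by (cases "schur_decomposition X es'") auto
  from schur_decomposition[OF X cp sd] have sim: "similar_mat_wit X B P Q" and ut: "upper_triangular B"
    and dB: "diag_mat B = es'" by auto
  note w = similar_mat_witD2[OF X sim]
  have B: "B \<in> carrier_mat n n" and P: "P \<in> carrier_mat n n" and Q: "Q \<in> carrier_mat n n" using w by auto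
  have "Q * X * P = Q * P * B * (Q * P)" apply (subst w(3)) using B P Q by (simp add: assoc_mult_mat[of _ n n _ n _ n] mult_carrier_mat[of _ n n _ n])
  hence BX: "B = Q * X * P" using w(2) B by simp
  have "B * B = Q * X * (P * Q) * X * P" unfolding BX using X P Q by (simp add: assoc_mult_mat[of _ n n _ n _ n] mult_carrier_mat[of _ n n _ n])
  also have "\<dots> = Q * X * X * P" unfolding w(1) using X Q by simp
  also have "\<dots> = Q * (X * X) * P" using X Q by (simp add: assoc_mult_mat[of _ n n _ n _ n])
  also have "\<dots> = B" unfolding BX idem ..
  finally have BB: "B * B = B" .
  have len: "length es' = n" using dB B unfolding diag_mat_def by auto
  have rn: "r \<le> n" using len unfolding r_def es'_def by simp
  have Bd: "B $$ (i,i) = (if i < r then 1 else 0)" if i: "i < n" for i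
  proof -
    have e: "es' ! i = B $$ (i,i)" using i B unfolding dB[symmetric] diag_mat_def by simp
    moreover have "es' ! i = 1" if ir: "i < r"
    proof -
      have "filter (\<lambda>e. e = 1) es ! i \<in> set (filter (\<lambda>e. e = 1) es)" by (rule nth_mem) (use ir r_def in simp)
      thus ?thesis using ir unfolding es'_def r_def by (simp add: nth_append)
    qed
    moreover have "es' ! i \<noteq> 1" if ir: "\<not> i < r"
    proof -
      have "i - r < length (filter (\<lambda>e. e \<noteq> 1) es)" using i len ir unfolding es'_def r_def by simp
      hence "filter (\<lambda>e. e \<noteq> 1) es ! (i - r) \<in> set (filter (\<lambda>e. e \<noteq> 1) es)" by (rule nth_mem)
      thus ?thesis using ir unfolding es'_def r_def by (simp add: nth_append)
    qed
    ultimately show ?thesis using idem_diag[OF B ut BB i] by auto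
  qed
  define S where "S = mat n n (\<lambda>(i,j). if j < r then B $$ (i,j) else (1\<^sub>m n - B) $$ (i,j))"
  have S: "S \<in> carrier_mat n n" unfolding S_def by simp
  have Sij: "S $$ (i,j) = (if j < r then B $$ (i,j) else (1\<^sub>m n - B) $$ (i,j))" if "i < n" "j < n" for i j
    using that unfolding S_def by simp
  have utS: "upper_triangular S"
    unfolding upper_triangular_def using S B ut Sij by (auto simp: upper_triangular_def)
  have "det S = prod_list (diag_mat S)" by (rule det_upper_triangular[OF utS S])
  also have "\<dots> = (\<Prod>i = 0..<n. S $$ (i,i))" using S by (simp add: prod_list_diag_prod)
  also have "\<dots> = (\<Prod>i = 0..<n. 1)" by (rule prod.cong, auto simp: Sij Bd carrier_matD[OF B])
  finally have "det S \<noteq> 0" by simp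
  from det_non_zero_imp_unit[OF S this, of undefined]
  obtain Si where Si: "Si \<in> carrier_mat n n" "Si * S = 1\<^sub>m n" "S * Si = 1\<^sub>m n"
    unfolding Units_def ring_mat_simps by auto
  have B1B: "B * (1\<^sub>m n - B) = 0\<^sub>m n n" using B BB by (simp add: mult_minus_distrib_mat[OF B one_carrier_mat B] right_mult_one_mat[OF B])
  have BS: "B * S = S * dg n r"
  proof (rule eq_matI)
    fix i j assume "i < dim_row (S * dg n r)" "j < dim_col (S * dg n r)"
    hence i: "i < n" and j: "j < n" using S by auto
    show "(B * S) $$ (i,j) = (S * dg n r) $$ (i,j)"
    proof (cases "j < r")
      case True
      have "col S j = col B j" by (rule eq_vecI, insert B i j True Sij carrier_matD[OF S], auto)
      hence "(B * S) $$ (i,j) = (B * B) $$ (i,j)" using B S i j by simp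
      thus ?thesis using BB mult_dg[OF S i j] True Sij[OF i j] by simp
    next
      case False
      have "col S j = col (1\<^sub>m n - B) j" by (rule eq_vecI, insert B i j False Sij carrier_matD[OF S] carrier_matD[OF B], auto)
      hence "(B * S) $$ (i,j) = (B * (1\<^sub>m n - B)) $$ (i,j)" using B S i j by simp
      thus ?thesis using B1B mult_dg[OF S i j] False i j by simp
    qed
  qed (insert B S, auto)
  define P' where "P' = P * S"
  define Pi' where "Pi' = Si * Q"
  have P': "P' \<in> carrier_mat n n" and Pi': "Pi' \<in> carrier_mat n n" unfolding P'_def Pi'_def using P S Si(1) Q by auto
  have "P' * Pi' = P * (S * Si) * Q" unfolding P'_def Pi'_def using P S Si(1) Q by (simp add: assoc_mult_mat[of _ n n _ n _ n] mult_carrier_mat[of _ n n _ n])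
  hence 1: "P' * Pi' = 1\<^sub>m n" unfolding Si(3) using w(1) P by simp
  have "Pi' * P' = Si * (Q * P) * S" unfolding P'_def Pi'_def using P S Si(1) Q by (simp add: assoc_mult_mat[of _ n n _ n _ n] mult_carrier_mat[of _ n n _ n])
  hence 2: "Pi' * P' = 1\<^sub>m n" unfolding w(2) using Si(2) Si(1) by simp
  have "X * P' = P * B * (Q * P) * S" unfolding P'_def apply (subst w(3)) using P B Q S by (simp add: assoc_mult_mat[of _ n n _ n _ n] mult_carrier_mat[of _ n n _ n])
  also have "\<dots> = P * B * S" unfolding w(2) using P B by simp
  also have "\<dots> = P * (B * S)" using P B S by simp
  also have "\<dots> = P' * dg n r" unfolding BS P'_def using P S by (simp add: assoc_mult_mat[of _ n n _ n _ n])
  finally show ?thesis using P' Pi' 1 2 rn by blast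
qed

lemma dg_dg: "dg n r * dg n r = dg n r"
proof (rule eq_matI)
  fix i j assume "i < dim_row (dg n r)" "j < dim_col (dg n r)"
  hence i: "i < n" and j: "j < n" by auto
  show "(dg n r * dg n r) $$ (i,j) = dg n r $$ (i,j)" using dg_mult[OF dg_carrier(1) i j, of r] i j by simp
qed auto

lemma dg_comm_entry: fixes M :: "complex mat"
  assumes M: "M \<in> carrier_mat n n" and c: "dg n r * M = M * dg n r"
    and i: "i < n" and j: "j < n" and ne: "(i < r) \<noteq> (j < r)"
  shows "M $$ (i,j) = 0"
proof -
  have "(dg n r * M) $$ (i,j) = (M * dg n r) $$ (i,j)" using c by simp
  thus ?thesis using dg_mult[OF M i j] mult_dg[OF M i j] ne by (auto split: if_splits)
qed

lemma adj3: fixes A B C :: "complex mat"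
  assumes "A \<in> carrier_mat n n" "B \<in> carrier_mat n n" "C \<in> carrier_mat n n"
  shows "mat_adjoint (A * B * C) = mat_adjoint C * mat_adjoint B * mat_adjoint A"
  using assms by (simp add: adj_mult[of _ n n _ n] assoc_mult_mat[of _ n n _ n _ n])

lemma inv_obtain: fixes P :: "complex mat"
  assumes P: "P \<in> carrier_mat n n" and inv: "invertible_mat P"
  obtains Pi where "Pi \<in> carrier_mat n n" "P * Pi = 1\<^sub>m n" "Pi * P = 1\<^sub>m n"
proof -
  from inv obtain Pi where a: "P * Pi = 1\<^sub>m (dim_row P)" and b: "Pi * P = 1\<^sub>m (dim_row Pi)"
    unfolding invertible_mat_def inverts_mat_def by auto
  have c: "dim_col Pi = n" using a P by (metis carrier_matD(1) index_mult_mat(3) index_one_mat(3))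
  have r: "dim_row Pi = n" using b P by (metis carrier_matD(2) index_mult_mat(3) index_one_mat(3))
  show ?thesis using that[of Pi] a b c r P by auto
qed

lemma dir2: fixes As :: "complex mat list" and X :: "complex mat"
  assumes As: "\<forall>A \<in> set As. A \<in> carrier_mat n n \<and> hermitian_mat A"
  and Xc: "X \<in> center n As" and idem: "X * X = X" and n0: "X \<noteq> 0\<^sub>m n n" and n1: "X \<noteq> 1\<^sub>m n"
  shows "\<exists>P ns. P \<in> carrier_mat n n \<and> invertible_mat P \<and> length ns \<ge> 2 \<and>
                   (\<forall>k \<in> set ns. k > 0) \<and> sum_list ns = n \<and>
                   (\<forall>A \<in> set As. block_diag_with ns (mat_adjoint P * A * P))"
proof -
  have X: "X \<in> carrier_mat n n" using Xc unfolding center_def by auto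
  obtain P Pi r where P: "P \<in> carrier_mat n n" and Pi: "Pi \<in> carrier_mat n n" and PPi: "P * Pi = 1\<^sub>m n"
    and PiP: "Pi * P = 1\<^sub>m n" and rn: "r \<le> n" and XP: "X * P = P * dg n r"
    using diagonalize_idem[OF X idem] by blast
  have XPPi: "X = P * dg n r * Pi"
  proof -
    have "X = X * (P * Pi)" using PPi X by simp
    also have "\<dots> = X * P * Pi" using X P Pi by (simp add: assoc_mult_mat[of _ n n _ n _ n] mult_carrier_mat[of _ n n _ n])
    finally show ?thesis unfolding XP .
  qed
  have r0: "r \<noteq> 0"
  proof
    assume "r = 0"
    hence "dg n r = 0\<^sub>m n n" by (intro eq_matI) auto
    hence "X = 0\<^sub>m n n" unfolding XPPi using P Pi by simp
    thus False using n0 by simp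
  qed
  have rn': "r \<noteq> n"
  proof
    assume "r = n"
    hence "dg n r = 1\<^sub>m n" by (intro eq_matI) auto
    hence "X = 1\<^sub>m n" unfolding XPPi using P Pi PPi by simp
    thus False using n1 by simp
  qed
  define ns where "ns = [r, n - r]"
  have invP: "invertible_mat P" unfolding invertible_mat_def inverts_mat_def using P Pi PPi PiP by auto
  have bd: "block_diag_with ns (mat_adjoint P * A * P)" if A0: "A \<in> set As" for A
  proof -
    have A: "A \<in> carrier_mat n n" and hA: "mat_adjoint A = A" using As A0 unfolding hermitian_mat_def by auto
    have AX: "mat_adjoint (A * X) = A * X" using Xc A0 unfolding center_def by auto
    define M where "M = mat_adjoint P * A * P"
    have M: "M \<in> carrier_mat n n" unfolding M_def using P A by auto
    have "dg n r * M = mat_adjoint (P * dg n r) * A * P"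
      unfolding M_def using P A by (simp add: adj_mult[of _ n n _ n] assoc_mult_mat[of _ n n _ n _ n] mult_carrier_mat[of _ n n _ n])
    also have "\<dots> = mat_adjoint P * mat_adjoint (A * X) * P"
      unfolding XP[symmetric] using P A X hA by (simp add: adj_mult[of _ n n _ n] assoc_mult_mat[of _ n n _ n _ n] mult_carrier_mat[of _ n n _ n])
    also have "\<dots> = mat_adjoint P * A * (X * P)"
      unfolding AX using P A X by (simp add: assoc_mult_mat[of _ n n _ n _ n] mult_carrier_mat[of _ n n _ n])
    also have "\<dots> = M * dg n r"
      unfolding XP M_def using P A by (simp add: assoc_mult_mat[of _ n n _ n _ n] mult_carrier_mat[of _ n n _ n])
    finally have comm: "dg n r * M = M * dg n r" .
    show ?thesis unfolding block_diag_with_def M_def[symmetric]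
    proof (intro allI impI)
      fix i j assume i: "i < dim_row M" and j: "j < dim_col M" and ns: "\<not> same_block ns i j"
      have i': "i < n" and j': "j < n" using i j M by auto
      have "(i < r) \<noteq> (j < r)"
      proof
        assume eq: "(i < r) = (j < r)"
        have "same_block ns i j" unfolding same_block_def ns_def
        proof (intro allI impI)
          fix k assume "k \<le> length [r, n - r]"
          hence "k = 0 \<or> k = 1 \<or> k = 2" by auto
          thus "(i < sum_list (take k [r, n - r])) = (j < sum_list (take k [r, n - r]))"
            using eq i' j' rn by auto
        qed
        thus False using ns by simp
      qed
      thus "M $$ (i,j) = 0" using dg_comm_entry[OF M comm i' j'] by simp
    qed
  qed
  show ?thesis
    by (rule exI[of _ P], rule exI[of _ ns]) (use P invP bd r0 rn rn' in \<open>auto simp: ns_def\<close>)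
qed

lemma dir1: fixes As :: "complex mat list" and P :: "complex mat"
  assumes As: "\<forall>A \<in> set As. A \<in> carrier_mat n n \<and> hermitian_mat A"
  and P: "P \<in> carrier_mat n n" and invP: "invertible_mat P" and len: "length ns \<ge> 2"
  and pos: "\<forall>k \<in> set ns. k > 0" and sum: "sum_list ns = n"
  and bd: "\<forall>A \<in> set As. block_diag_with ns (mat_adjoint P * A * P)"
  shows "\<exists>X \<in> center n As. X * X = X \<and> X \<noteq> 0\<^sub>m n n \<and> X \<noteq> 1\<^sub>m n"
proof -
  obtain Pi where Pi: "Pi \<in> carrier_mat n n" and PPi: "P * Pi = 1\<^sub>m n" and PiP: "Pi * P = 1\<^sub>m n"
    using inv_obtain[OF P invP] by blast
  obtain a b rest where ns: "ns = a # b # rest" using len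
    by (metis Suc_le_length_iff numeral_2_eq_2)
  have a0: "a > 0" and b0: "b > 0" using pos ns by auto
  have an: "a < n" using sum ns b0 by simp
  define E where "E = dg n a"
  have E: "E \<in> carrier_mat n n" unfolding E_def by simp
  define X where "X = P * E * Pi"
  have X: "X \<in> carrier_mat n n" unfolding X_def using P E Pi by auto
  have PXP: "Pi * X * P = E"
  proof -
    have "Pi * X * P = (Pi * P) * E * (Pi * P)" unfolding X_def using P E Pi
      by (simp add: assoc_mult_mat[of _ n n _ n _ n] mult_carrier_mat[of _ n n _ n])
    thus ?thesis unfolding PiP using E by simp
  qed
  have idem: "X * X = X"
  proof -
    have "X * X = P * E * (Pi * P) * E * Pi" unfolding X_def using P E Pi
      by (simp add: assoc_mult_mat[of _ n n _ n _ n] mult_carrier_mat[of _ n n _ n])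
    also have "\<dots> = P * (E * E) * Pi" unfolding PiP using P E Pi
      by (simp add: assoc_mult_mat[of _ n n _ n _ n] mult_carrier_mat[of _ n n _ n])
    finally show ?thesis unfolding E_def dg_dg X_def .
  qed
  have nz: "X \<noteq> 0\<^sub>m n n"
  proof
    assume "X = 0\<^sub>m n n"
    hence "E = 0\<^sub>m n n" using PXP P Pi by auto
    hence "E $$ (0,0) = 0" using a0 an by simp
    thus False using a0 an unfolding E_def by simp
  qed
  have n1: "X \<noteq> 1\<^sub>m n"
  proof
    assume "X = 1\<^sub>m n"
    hence "E = 1\<^sub>m n" using PXP PiP Pi by auto
    hence "E $$ (a,a) = 1" using an by simp
    thus False using an unfolding E_def by simp
  qed
  have cen: "X \<in> center n As" unfolding center_def
  proof (intro CollectI conjI ballI X)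
    fix A assume A0: "A \<in> set As"
    have A: "A \<in> carrier_mat n n" and hA: "mat_adjoint A = A" using As A0 unfolding hermitian_mat_def by auto
    define M where "M = mat_adjoint P * A * P"
    have M: "M \<in> carrier_mat n n" unfolding M_def using P A by auto
    have bdM: "block_diag_with ns M" using bd A0 unfolding M_def by auto
    have comm: "E * M = M * E"
    proof (rule eq_matI)
      fix i j assume "i < dim_row (M * E)" "j < dim_col (M * E)"
      hence i: "i < n" and j: "j < n" using M E by auto
      have "M $$ (i,j) = 0" if ne: "(i < a) \<noteq> (j < a)"
      proof -
        have "\<not> same_block ns i j" unfolding same_block_def
        proof
          assume "\<forall>k\<le>length ns. (i < sum_list (take k ns)) = (j < sum_list (take k ns))"
          hence "(i < sum_list (take 1 ns)) = (j < sum_list (take 1 ns))" using len by auto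
          thus False using ne ns by simp
        qed
        thus ?thesis using bdM i j M unfolding block_diag_with_def by auto
      qed
      thus "(E * M) $$ (i,j) = (M * E) $$ (i,j)"
        unfolding E_def using dg_mult[OF M i j] mult_dg[OF M i j] by auto
    qed (insert M E, auto)
    have adjM: "mat_adjoint M = M" unfolding M_def adj3[OF adj_carrier[OF P] A P] hA adj_adj ..
    have "mat_adjoint Pi * M * Pi = mat_adjoint (P * Pi) * A * (P * Pi)" unfolding M_def using P Pi A
      by (simp add: adj_mult[of _ n n _ n] assoc_mult_mat[of _ n n _ n _ n] mult_carrier_mat[of _ n n _ n])
    hence AM: "A = mat_adjoint Pi * M * Pi" unfolding PPi using A by simp
    have "A * X = mat_adjoint Pi * M * (Pi * P) * E * Pi" unfolding AM X_def using P Pi M E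
      by (simp add: assoc_mult_mat[of _ n n _ n _ n] mult_carrier_mat[of _ n n _ n])
    also have "\<dots> = mat_adjoint Pi * (M * E) * Pi" unfolding PiP using P Pi M E
      by (simp add: assoc_mult_mat[of _ n n _ n _ n] mult_carrier_mat[of _ n n _ n])
    finally have AX: "A * X = mat_adjoint Pi * (M * E) * Pi" .
    have "mat_adjoint (A * X) = mat_adjoint Pi * (mat_adjoint E * mat_adjoint M) * Pi"
      unfolding AX adj3[OF adj_carrier[OF Pi] mult_carrier_mat[OF M E] Pi] adj_adj adj_mult[OF M E] ..
    also have "\<dots> = A * X" unfolding AX adjM E_def adj_dg comm[unfolded E_def] ..
    finally show "mat_adjoint (A * X) = A * X" .
  qed
  show ?thesis using cen idem nz n1 by blast
qed


theorem mainTheorem8: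
  fixes n :: nat and As :: "complex mat list"
  assumes "\<forall>A \<in> set As. A \<in> carrier_mat n n \<and> hermitian_mat A"
  shows "(\<not> (\<exists>P ns. P \<in> carrier_mat n n \<and> invertible_mat P \<and> length ns \<ge> 2 \<and>
                   (\<forall>k \<in> set ns. k > 0) \<and> sum_list ns = n \<and>
                   (\<forall>A \<in> set As. block_diag_with ns (mat_adjoint P * A * P))))
         \<longleftrightarrow> (\<forall>X \<in> center n As. X * X = X \<longrightarrow> X = 0\<^sub>m n n \<or> X = 1\<^sub>m n)"
  proof -
  have "(\<exists>P ns. P \<in> carrier_mat n n \<and> invertible_mat P \<and> length ns \<ge> 2 \<and>
                   (\<forall>k \<in> set ns. k > 0) \<and> sum_list ns = n \<and>
                   (\<forall>A \<in> set As. block_diag_with ns (mat_adjoint P * A * P)))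
        \<longleftrightarrow> (\<exists>X \<in> center n As. X * X = X \<and> X \<noteq> 0\<^sub>m n n \<and> X \<noteq> 1\<^sub>m n)"
    using dir1[OF assms] dir2[OF assms] by blast
  thus ?thesis by blast
qed

end
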